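(* Consider two predator species $i=1,2$, each feeding on the same prey population according to the model described in the context, with quantities for predator $i$ carrying subscript $i$ ($\psi_i$, $\tilde A_{i,t}$, $\tilde X_{i,t}$, $Y_{i,t}$). Suppose Assumptions (A) and (B) hold (for each predator), that $\mathbb{E}(X_t)\propto t$ for all $t\ge0$, and that for all $t\ge0$, $\tilde A_{1,t}\le_{lr}\tilde A_{2,t}$ and \[ \mathbb{E}(\tilde{A}_{1,t})\, \psi_{1}(t) = \mathbb{E}(\tilde{A}_{2,t})\, \psi_{2}(t). \] Then $\psi_1(t)\ge\psi_2(t)$ and \[ \frac{\mathrm{var}(Y_{1,t})}{\mathbb{E}(Y_{1,t})} \leq \frac{\mathrm{var}(Y_{2,t})}{\mathbb{E}(Y_{2,t})} \] for all $t\ge0$.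
   Context: Model. The parasite burden of a prey aged $t\ge 0$ is $X_t$, where $(X_t)_{t\ge0}$ is a non-decreasing integer-valued stochastic process with $X_0=0$ (moments assumed finite, denominators positive). Prey ages have probability density $f_A$ on $[0,\infty)$. Predator $i$ encounters random prey at the times of a non-homogeneous Poisson process with intensity $\phi_i$; a predator $i$ aged $t$ consumes an encountered prey aged $u$ with probability $p_i(u,t)$. The consumption times form a Poisson process with intensity $\psi_i(t)=\phi_i(t)\int_0^\infty p_i(u,t)f_A(u)\,du$. The age $\tilde A_{i,t}$ of a prey consumed by predator $i$ aged $t$ has density $p_i(a,t)f_A(a)/\int_0^\infty p_i(u,t)f_A(u)\,du$, and $\tilde X_{i,t}=X_{\tilde A_{i,t}}$ (with $\tilde A_{i,t}$ independent of $X$). Consumed prey transfer all parasites, contributions being independent; the burden $Y_{i,t}$ of predator $i$ at age $t$ ($Y_{i,0}=0$) is the sum over consumption times $s\le t$ of independent copies of $\tilde X_{i,s}$, so $\mathbb{E}(Y_{i,t})=\int_0^t\mathbb{E}(\tilde X_{i,s})\psi_i(s)ds$, $\mathrm{var}(Y_{i,t})=\int_0^t\mathbb{E}(\tilde X_{i,s}^2)\psi_i(s)ds$. Likelihood ratio order: for random variables $U,V$ (both discrete or both continuous) with mass/density functions $p_U,p_V$, $U\le_{lr}V$ means $p_V(w)/p_U(w)$ is non-decreasing in $w$ over the union of the supports. Assumption (A): for all $0\le s\le t$, $X_s\le_{lr}X_t$. Assumption (B) (for predator $i$): for all $0\le s<t$, $p_i(u,t)/p_i(u,s)$ is non-decreasing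 in $u$. *)

theory Defs
  imports "HOL-Probability.Probability"
begin

(* Ratio  pV w / pU w  (computed in ennreal, so that c/0 = \<infinity> for c > 0)
   is non-decreasing in w over S intersected with the union of the supports. *)
definition ratio_nondec :: "'b::linorder set \<Rightarrow> ('b \<Rightarrow> real) \<Rightarrow> ('b \<Rightarrow> real) \<Rightarrow> bool" where
  "ratio_nondec S pU pV \<longleftrightarrow>
     (\<forall>w1\<in>S. \<forall>w2\<in>S. w1 \<le> w2 \<longrightarrow> (pU w1 \<noteq> 0 \<or> pV w1 \<noteq> 0) \<longrightarrow> (pU w2 \<noteq> 0 \<or> pV w2 \<noteq> 0) \<longrightarrow>
        ennreal (pV w1) / ennreal (pU w1) \<le> ennreal (pV w2) / ennreal (pU w2))"

definition lr_le :: "('b::linorder \<Rightarrow> real) \<Rightarrow> ('b \<Rightarrow> real) \<Rightarrow> bool" where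
  "lr_le pU pV \<longleftrightarrow> ratio_nondec UNIV pU pV"

definition pmf_X :: "'a measure \<Rightarrow> (real \<Rightarrow> 'a \<Rightarrow> int) \<Rightarrow> real \<Rightarrow> int \<Rightarrow> real" where
  "pmf_X M X t k = measure M {\<omega> \<in> space M. X t \<omega> = k}"

definition mom1 :: "'a measure \<Rightarrow> (real \<Rightarrow> 'a \<Rightarrow> int) \<Rightarrow> real \<Rightarrow> real" where
  "mom1 M X t = (\<integral>\<omega>. real_of_int (X t \<omega>) \<partial>M)"

definition mom2 :: "'a measure \<Rightarrow> (real \<Rightarrow> 'a \<Rightarrow> int) \<Rightarrow> real \<Rightarrow> real" where
  "mom2 M X t = (\<integral>\<omega>. (real_of_int (X t \<omega>))^2 \<partial>M)"

definition norm_const :: "(real \<Rightarrow> real) \<Rightarrow> (real \<Rightarrow> real \<Rightarrow> real) \<Rightarrow> real \<Rightarrow> real" where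
  "norm_const fA p t = (LINT u:{0..}|lborel. p u t * fA u)"

definition psi :: "(real \<Rightarrow> real) \<Rightarrow> (real \<Rightarrow> real \<Rightarrow> real) \<Rightarrow> (real \<Rightarrow> real) \<Rightarrow> real \<Rightarrow> real" where
  "psi fA p phi t = phi t * norm_const fA p t"

(* density of the age \<tilde>A_t of a prey consumed by a predator aged t (zero for negative ages) *)
definition age_dens :: "(real \<Rightarrow> real) \<Rightarrow> (real \<Rightarrow> real \<Rightarrow> real) \<Rightarrow> real \<Rightarrow> real \<Rightarrow> real" where
  "age_dens fA p t a = (if 0 \<le> a then p a t * fA a / norm_const fA p t else 0)"

definition mean_age :: "(real \<Rightarrow> real) \<Rightarrow> (real \<Rightarrow> real \<Rightarrow> real) \<Rightarrow> real \<Rightarrow> real" where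
  "mean_age fA p t = (LINT a:{0..}|lborel. a * age_dens fA p t a)"

(* E(\<tilde>X_t) and E(\<tilde>X_t^2), with \<tilde>X_t = X_{\<tilde>A_t}, \<tilde>A_t independent of X *)
definition mean_Xt :: "'a measure \<Rightarrow> (real \<Rightarrow> 'a \<Rightarrow> int) \<Rightarrow> (real \<Rightarrow> real) \<Rightarrow> (real \<Rightarrow> real \<Rightarrow> real) \<Rightarrow> real \<Rightarrow> real" where
  "mean_Xt M X fA p t = (LINT a:{0..}|lborel. mom1 M X a * age_dens fA p t a)"

definition sq_Xt :: "'a measure \<Rightarrow> (real \<Rightarrow> 'a \<Rightarrow> int) \<Rightarrow> (real \<Rightarrow> real) \<Rightarrow> (real \<Rightarrow> real \<Rightarrow> real) \<Rightarrow> real \<Rightarrow> real" where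
  "sq_Xt M X fA p t = (LINT a:{0..}|lborel. mom2 M X a * age_dens fA p t a)"

definition mean_Y :: "'a measure \<Rightarrow> (real \<Rightarrow> 'a \<Rightarrow> int) \<Rightarrow> (real \<Rightarrow> real) \<Rightarrow> (real \<Rightarrow> real \<Rightarrow> real) \<Rightarrow> (real \<Rightarrow> real) \<Rightarrow> real \<Rightarrow> real" where
  "mean_Y M X fA p phi t = (LINT s:{0..t}|lborel. mean_Xt M X fA p s * psi fA p phi s)"

definition var_Y :: "'a measure \<Rightarrow> (real \<Rightarrow> 'a \<Rightarrow> int) \<Rightarrow> (real \<Rightarrow> real) \<Rightarrow> (real \<Rightarrow> real \<Rightarrow> real) \<Rightarrow> (real \<Rightarrow> real) \<Rightarrow> real \<Rightarrow> real" where
  "var_Y M X fA p phi t = (LINT s:{0..t}|lborel. sq_Xt M X fA p s * psi fA p phi s)"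

definition predator_ok :: "'a measure \<Rightarrow> (real \<Rightarrow> 'a \<Rightarrow> int) \<Rightarrow> (real \<Rightarrow> real) \<Rightarrow> (real \<Rightarrow> real \<Rightarrow> real) \<Rightarrow> (real \<Rightarrow> real) \<Rightarrow> bool" where
  "predator_ok M X fA p phi \<longleftrightarrow>
     (\<forall>u t. 0 \<le> u \<longrightarrow> 0 \<le> t \<longrightarrow> 0 \<le> p u t \<and> p u t \<le> 1) \<and>
     (\<forall>t\<ge>0. 0 \<le> phi t) \<and>
     (\<forall>t\<ge>0. set_integrable lborel {0..} (\<lambda>u. p u t * fA u)) \<and>
     (\<forall>t\<ge>0. 0 < norm_const fA p t) \<and>
     (\<forall>t\<ge>0. set_integrable lborel {0..} (\<lambda>a. a * age_dens fA p t a)) \<and>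
     (\<forall>t\<ge>0. set_integrable lborel {0..} (\<lambda>a. mom1 M X a * age_dens fA p t a)) \<and>
     (\<forall>t\<ge>0. set_integrable lborel {0..} (\<lambda>a. mom2 M X a * age_dens fA p t a)) \<and>
     (\<forall>t\<ge>0. set_integrable lborel {0..t} (\<lambda>s. mean_Xt M X fA p s * psi fA p phi s)) \<and>
     (\<forall>t\<ge>0. set_integrable lborel {0..t} (\<lambda>s. sq_Xt M X fA p s * psi fA p phi s)) \<and>
     (\<forall>t>0. 0 < mean_Y M X fA p phi t)"

definition assumption_B :: "(real \<Rightarrow> real \<Rightarrow> real) \<Rightarrow> bool" where
  "assumption_B p \<longleftrightarrow> (\<forall>s t. 0 \<le> s \<longrightarrow> s < t \<longrightarrow> ratio_nondec {0..} (\<lambda>u. p u s) (\<lambda>u. p u t))"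

end

theory Submission
  imports Defs "HOL-Probability.Probability"
begin


lemma prod_integrable:
  fixes f g :: "'b \<Rightarrow> real"
  assumes "sigma_finite_measure N" "integrable N f" "integrable N g"
  shows "integrable (N \<Otimes>\<^sub>M N) (\<lambda>(x,y). f x * g y)"
    and "(\<integral>z. (case z of (x,y) \<Rightarrow> f x * g y) \<partial>(N \<Otimes>\<^sub>M N)) = integral\<^sup>L N f * integral\<^sup>L N g"
proof -
  interpret pair_sigma_finite N N using assms(1) by (simp add: pair_sigma_finite_def)
  have [measurable]: "f \<in> borel_measurable N" "g \<in> borel_measurable N" using assms by auto
  show i: "integrable (N \<Otimes>\<^sub>M N) (\<lambda>(x,y). f x * g y)"
  proof (rule Fubini_integrable)
    show "(\<lambda>(x,y). f x * g y) \<in> borel_measurable (N \<Otimes>\<^sub>M N)" by measurable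
    have "(\<lambda>x. \<integral>y. norm ((case (x,y) of (x,y) \<Rightarrow> f x * g y)) \<partial>N) = (\<lambda>x. \<bar>f x\<bar> * (\<integral>y. \<bar>g y\<bar> \<partial>N))"
      by (simp add: abs_mult)
    then show "integrable N (\<lambda>x. \<integral>y. norm ((case (x,y) of (x,y) \<Rightarrow> f x * g y)) \<partial>N)"
      using assms by simp
    show "AE x in N. integrable N (\<lambda>y. case (x, y) of (x, y) \<Rightarrow> f x * g y)"
      using assms by simp
  qed
  have "(\<integral>z. (case z of (x,y) \<Rightarrow> f x * g y) \<partial>(N \<Otimes>\<^sub>M N)) = (\<integral>x. (\<integral>y. f x * g y \<partial>N) \<partial>N)"
    using integral_fst[of "\<lambda>x y. f x * g y"] i by simp
  also have "\<dots> = integral\<^sup>L N f * integral\<^sup>L N g" by simp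
  finally show "(\<integral>z. (case z of (x,y) \<Rightarrow> f x * g y) \<partial>(N \<Otimes>\<^sub>M N)) = integral\<^sup>L N f * integral\<^sup>L N g" .
qed

lemma chebyshev_lr:
  fixes g1 g2 hg1 hg2 :: "'b \<Rightarrow> real"
  assumes sf: "sigma_finite_measure N"
    and i: "integrable N g1" "integrable N g2" "integrable N hg1" "integrable N hg2"
    and pt: "\<And>a b. 0 \<le> hg2 b * g1 a - hg1 a * g2 b + hg2 a * g1 b - hg1 b * g2 a"
  shows "integral\<^sup>L N hg1 * integral\<^sup>L N g2 \<le> integral\<^sup>L N hg2 * integral\<^sup>L N g1"
proof -
  interpret pair_sigma_finite N N using sf by (simp add: pair_sigma_finite_def)
  define P where "P = (\<lambda>(a,b). hg2 b * g1 a - hg1 a * g2 b)"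
  have i1: "integrable (N \<Otimes>\<^sub>M N) (\<lambda>(x,y). g1 x * hg2 y)" and e1: "(\<integral>z. (case z of (x,y) \<Rightarrow> g1 x * hg2 y) \<partial>(N \<Otimes>\<^sub>M N)) = integral\<^sup>L N g1 * integral\<^sup>L N hg2"
    using prod_integrable[OF sf i(1) i(4)] by auto
  have i2: "integrable (N \<Otimes>\<^sub>M N) (\<lambda>(x,y). hg1 x * g2 y)" and e2: "(\<integral>z. (case z of (x,y) \<Rightarrow> hg1 x * g2 y) \<partial>(N \<Otimes>\<^sub>M N)) = integral\<^sup>L N hg1 * integral\<^sup>L N g2"
    using prod_integrable[OF sf i(3) i(2)] by auto
  have PI: "integrable (N \<Otimes>\<^sub>M N) P"
  proof -
    have "P = (\<lambda>z. (case z of (x,y) \<Rightarrow> g1 x * hg2 y) - (case z of (x,y) \<Rightarrow> hg1 x * g2 y))"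
      by (auto simp: P_def fun_eq_iff mult.commute)
    then show ?thesis using Bochner_Integration.integrable_diff[OF i1 i2] by simp
  qed
  have PE: "integral\<^sup>L (N \<Otimes>\<^sub>M N) P = integral\<^sup>L N g1 * integral\<^sup>L N hg2 - integral\<^sup>L N hg1 * integral\<^sup>L N g2"
  proof -
    have "P = (\<lambda>z. (case z of (x,y) \<Rightarrow> g1 x * hg2 y) - (case z of (x,y) \<Rightarrow> hg1 x * g2 y))"
      by (auto simp: P_def fun_eq_iff mult.commute)
    then show ?thesis using Bochner_Integration.integral_diff[OF i1 i2] e1 e2 by simp
  qed
  have PM: "P \<in> borel_measurable (N \<Otimes>\<^sub>M N)" using PI by auto
  have SI: "integrable (N \<Otimes>\<^sub>M N) (\<lambda>(x,y). P (y,x))"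
    using integrable_product_swap[OF PI] .
  have SE: "(\<integral>(x,y). P (y,x) \<partial>(N \<Otimes>\<^sub>M N)) = integral\<^sup>L (N \<Otimes>\<^sub>M N) P"
    using integral_product_swap[OF PM] .
  have "0 \<le> (\<integral>z. P z + (case z of (x,y) \<Rightarrow> P (y,x)) \<partial>(N \<Otimes>\<^sub>M N))"
    by (rule integral_nonneg_AE) (auto simp: P_def intro!: AE_I2 pt[simplified add_diff_eq[symmetric]])
  also have "\<dots> = 2 * integral\<^sup>L (N \<Otimes>\<^sub>M N) P"
    using PI SI SE by simp
  finally show ?thesis using PE by (simp add: mult.commute)
qed




lemma lr_cross:
  assumes "ratio_nondec S pU pV" "\<And>w. 0 \<le> pU w" "\<And>w. 0 \<le> pV w"
    and "a \<in> S" "b \<in> S" "a \<le> b"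
  shows "pV a * pU b \<le> pU a * pV b"
proof (cases "(pU a \<noteq> 0 \<or> pV a \<noteq> 0) \<and> (pU b \<noteq> 0 \<or> pV b \<noteq> 0)")
  case False
  then show ?thesis using assms(2,3) by (auto intro: mult_nonneg_nonneg)
next
  case True
  then have r: "ennreal (pV a) / ennreal (pU a) \<le> ennreal (pV b) / ennreal (pU b)"
    using assms unfolding ratio_nondec_def by blast
  show ?thesis
  proof (cases "pU b = 0")
    case True then show ?thesis using assms(2,3) by simp
  next
    case nb: False
    then have ub: "pU b > 0" using assms(2)[of b] by simp
    show ?thesis
    proof (cases "pU a = 0")
      case True
      then have "pV a > 0" using \<open>(pU a \<noteq> 0 \<or> pV a \<noteq> 0) \<and> _\<close> assms(3)[of a] by auto
      then have "ennreal (pV a) / ennreal (pU a) = top" using True by (simp add: divide_ennreal_def)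
      moreover have "ennreal (pV b) / ennreal (pU b) \<noteq> top"
        using ub assms(3)[of b] by (simp add: ennreal_divide_eq_top_iff)
      ultimately show ?thesis using r by (simp add: top_unique)
    next
      case False
      then have ua: "pU a > 0" using assms(2)[of a] by simp
      have "ennreal (pV a / pU a) \<le> ennreal (pV b / pU b)"
        using r ua ub assms(3)[of a] assms(3)[of b]
        by (simp add: divide_ennreal)
      then have "pV a / pU a \<le> pV b / pU b"
        using ua ub assms(3)[of b] by (simp add: ennreal_le_iff divide_nonneg_pos)
      then show ?thesis using ua ub by (simp add: field_simps)
    qed
  qed
qed




lemma distr_X_density:
  assumes "prob_space M" "X t \<in> measurable M (count_space UNIV)"
  shows "distr M (count_space UNIV) (X t) = density (count_space UNIV) (\<lambda>k. ennreal (pmf_X M X t k))"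
proof (rule measure_eqI_countable[where A=UNIV])
  fix k :: int
  interpret prob_space M by fact
  have "emeasure (distr M (count_space UNIV) (X t)) {k} = emeasure M (X t -` {k} \<inter> space M)"
    using assms(2) by (simp add: emeasure_distr)
  also have "X t -` {k} \<inter> space M = {\<omega> \<in> space M. X t \<omega> = k}" by auto
  also have "emeasure M \<dots> = ennreal (pmf_X M X t k)"
    unfolding pmf_X_def by (simp add: emeasure_eq_measure)
  also have "\<dots> = emeasure (density (count_space UNIV) (\<lambda>k. ennreal (pmf_X M X t k))) {k}"
    by (simp add: emeasure_density nn_integral_count_space_indicator)
  finally show "emeasure (distr M (count_space UNIV) (X t)) {k} = emeasure (density (count_space UNIV) (\<lambda>k. ennreal (pmf_X M X t k))) {k}" .
qed auto

lemma pmf_X_nonneg: "0 \<le> pmf_X M X t k" by (simp add: pmf_X_def)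

lemma mom_count:
  fixes f :: "int \<Rightarrow> real"
  assumes "prob_space M" "X t \<in> measurable M (count_space UNIV)"
  shows "integrable M (\<lambda>\<omega>. f (X t \<omega>)) \<longleftrightarrow> integrable (count_space UNIV) (\<lambda>k. pmf_X M X t k * f k)"
    and "(\<integral>\<omega>. f (X t \<omega>) \<partial>M) = (\<integral>k. pmf_X M X t k * f k \<partial>count_space UNIV)"
proof -
  have "integrable M (\<lambda>\<omega>. f (X t \<omega>)) \<longleftrightarrow> integrable (distr M (count_space UNIV) (X t)) f"
    using assms(2) by (simp add: integrable_distr_eq)
  also have "\<dots> \<longleftrightarrow> integrable (count_space UNIV) (\<lambda>k. pmf_X M X t k * f k)"
    unfolding distr_X_density[of M X t, OF assms]
    by (subst integrable_density) (auto simp: pmf_X_nonneg)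
  finally show "integrable M (\<lambda>\<omega>. f (X t \<omega>)) \<longleftrightarrow> integrable (count_space UNIV) (\<lambda>k. pmf_X M X t k * f k)" .
  have "(\<integral>\<omega>. f (X t \<omega>) \<partial>M) = integral\<^sup>L (distr M (count_space UNIV) (X t)) f"
    using assms(2) by (simp add: integral_distr)
  also have "\<dots> = (\<integral>k. pmf_X M X t k * f k \<partial>count_space UNIV)"
    unfolding distr_X_density[of M X t, OF assms]
    by (subst integral_density) (auto simp: pmf_X_nonneg)
  finally show "(\<integral>\<omega>. f (X t \<omega>) \<partial>M) = (\<integral>k. pmf_X M X t k * f k \<partial>count_space UNIV)" .
qed

lemma pmf_X_neg:
  assumes "\<forall>\<omega>\<in>space M. 0 \<le> X t \<omega>" "k < 0"
  shows "pmf_X M X t k = 0"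
proof -
  have "{\<omega> \<in> space M. X t \<omega> = k} = {}" using assms by force
  then show ?thesis unfolding pmf_X_def by (metis measure_empty)
qed

lemma mom_mono:
  assumes "prob_space M"
    and meas: "X s \<in> measurable M (count_space UNIV)" "X t \<in> measurable M (count_space UNIV)"
    and nn: "\<forall>\<omega>\<in>space M. 0 \<le> X s \<omega>" "\<forall>\<omega>\<in>space M. 0 \<le> X t \<omega>"
    and i: "integrable M (\<lambda>\<omega>. real_of_int (X s \<omega>))" "integrable M (\<lambda>\<omega>. (real_of_int (X s \<omega>))^2)"
           "integrable M (\<lambda>\<omega>. real_of_int (X t \<omega>))" "integrable M (\<lambda>\<omega>. (real_of_int (X t \<omega>))^2)"
    and lr: "lr_le (pmf_X M X s) (pmf_X M X t)"
  shows "mom2 M X s * mom1 M X t \<le> mom2 M X t * mom1 M X s"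
proof -
  let ?N = "count_space (UNIV::int set)"
  define ps where "ps = pmf_X M X s"
  define pt where "pt = pmf_X M X t"
  note ms = mom_count[where M=M and X=X and t=s, OF assms(1) meas(1)] and mt = mom_count[where M=M and X=X and t=t, OF assms(1) meas(2)]
  have I1: "integrable ?N (\<lambda>k. ps k * real_of_int k)" using ms(1)[of real_of_int] i(1) ps_def by simp
  have I2: "integrable ?N (\<lambda>k. pt k * real_of_int k)" using mt(1)[of real_of_int] i(3) pt_def by simp
  have I3: "integrable ?N (\<lambda>k. ps k * (real_of_int k)^2)" using ms(1)[of "\<lambda>k. (real_of_int k)^2"] i(2) ps_def by simp
  have I4: "integrable ?N (\<lambda>k. pt k * (real_of_int k)^2)" using mt(1)[of "\<lambda>k. (real_of_int k)^2"] i(4) pt_def by simp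
  have E1: "mom1 M X s = (\<integral>k. ps k * real_of_int k \<partial>?N)" using ms(2)[of real_of_int] unfolding ps_def mom1_def by simp
  have E2: "mom1 M X t = (\<integral>k. pt k * real_of_int k \<partial>?N)" using mt(2)[of real_of_int] unfolding pt_def mom1_def by simp
  have E3: "mom2 M X s = (\<integral>k. ps k * (real_of_int k)^2 \<partial>?N)" using ms(2)[of "\<lambda>k. (real_of_int k)^2"] unfolding ps_def mom2_def by simp
  have E4: "mom2 M X t = (\<integral>k. pt k * (real_of_int k)^2 \<partial>?N)" using mt(2)[of "\<lambda>k. (real_of_int k)^2"] unfolding pt_def mom2_def by simp
  have cross: "pt a * ps b \<le> ps a * pt b" if "a \<le> b" for a b
    using lr_cross[of UNIV ps pt a b] lr that unfolding lr_le_def ps_def pt_def by (auto simp: pmf_X_nonneg)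
  have key: "0 \<le> (b - a) * (a * b) * (ps a * pt b - ps b * pt a)" if "a \<le> b" for a b :: int
  proof (cases "a < 0")
    case True then show ?thesis using pmf_X_neg[of M X s, OF nn(1)] pmf_X_neg[of M X t, OF nn(2)] ps_def pt_def by simp
  next
    case False
    then have "0 \<le> real_of_int (b - a) * (a * b)" using that by simp
    moreover have "0 \<le> ps a * pt b - ps b * pt a" using cross[OF that] by (simp add: mult.commute)
    ultimately show ?thesis using mult_nonneg_nonneg by (metis of_int_mult)
  qed
  have pt: "0 \<le> (\<lambda>k. pt k * (real_of_int k)^2) b * (\<lambda>k. ps k * real_of_int k) a
              - (\<lambda>k. ps k * (real_of_int k)^2) a * (\<lambda>k. pt k * real_of_int k) b
              + (\<lambda>k. pt k * (real_of_int k)^2) a * (\<lambda>k. ps k * real_of_int k) b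
              - (\<lambda>k. ps k * (real_of_int k)^2) b * (\<lambda>k. pt k * real_of_int k) a" for a b
  proof -
    have eq: "(\<lambda>k. pt k * (real_of_int k)^2) b * (\<lambda>k. ps k * real_of_int k) a
              - (\<lambda>k. ps k * (real_of_int k)^2) a * (\<lambda>k. pt k * real_of_int k) b
              + (\<lambda>k. pt k * (real_of_int k)^2) a * (\<lambda>k. ps k * real_of_int k) b
              - (\<lambda>k. ps k * (real_of_int k)^2) b * (\<lambda>k. pt k * real_of_int k) a
           = (b - a) * (a * b) * (ps a * pt b - ps b * pt a)"
      by (simp add: algebra_simps power2_eq_square)
    show ?thesis
    proof (cases "a \<le> b")
      case True then show ?thesis using eq key by simp
    next
      case False
      then have "0 \<le> (a - b) * (b * a) * (ps b * pt a - ps a * pt b)" using key[of b a] by simp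
      moreover have "(a - b) * (b * a) * (ps b * pt a - ps a * pt b) = (b - a) * (a * b) * (ps a * pt b - ps b * pt a)"
        by (simp add: algebra_simps)
      ultimately show ?thesis using eq by (simp only:)
    qed
  qed
  have "(\<integral>k. ps k * (real_of_int k)^2 \<partial>?N) * (\<integral>k. pt k * real_of_int k \<partial>?N)
        \<le> (\<integral>k. pt k * (real_of_int k)^2 \<partial>?N) * (\<integral>k. ps k * real_of_int k \<partial>?N)"
    by (rule chebyshev_lr[OF _ I1 I2 I3 I4 pt]) (rule sigma_finite_measure_count_space)
  then show ?thesis using E1 E2 E3 E4 by simp
qed




lemma set0:
  fixes F :: "real \<Rightarrow> real"
  assumes "\<And>a. a < 0 \<Longrightarrow> F a = 0"
  shows "set_integrable lborel {0..} F \<longleftrightarrow> integrable lborel F"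
    and "(LINT a:{0..}|lborel. F a) = integral\<^sup>L lborel F"
proof -
  have e: "(\<lambda>a. indicator {0..} a *\<^sub>R F a) = F"
    using assms by (force simp: fun_eq_iff indicator_def)
  show "set_integrable lborel {0..} F \<longleftrightarrow> integrable lborel F"
    unfolding set_integrable_def e ..
  show "(LINT a:{0..}|lborel. F a) = integral\<^sup>L lborel F"
    unfolding set_lebesgue_integral_def e ..
qed

lemma pt_from_h:
  fixes h g1 g2 hg1 hg2 :: "'b::linorder \<Rightarrow> real"
  assumes "\<And>x. hg1 x = h x * g1 x" "\<And>x. hg2 x = h x * g2 x"
    and "\<And>a b. a \<le> b \<Longrightarrow> h a \<le> h b"
    and "\<And>a b. a \<le> b \<Longrightarrow> g1 b * g2 a \<le> g1 a * g2 b"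
  shows "0 \<le> hg2 b * g1 a - hg1 a * g2 b + hg2 a * g1 b - hg1 b * g2 a"
proof -
  have eq: "hg2 b * g1 a - hg1 a * g2 b + hg2 a * g1 b - hg1 b * g2 a
      = (h b - h a) * (g1 a * g2 b - g1 b * g2 a)"
    using assms(1,2) by (simp add: algebra_simps)
  show ?thesis
  proof (cases "a \<le> b")
    case True
    then show ?thesis unfolding eq using assms(3,4)[OF True] by (simp add: mult_nonneg_nonneg)
  next
    case False
    then have ba: "b \<le> a" by simp
    have "(h b - h a) * (g1 a * g2 b - g1 b * g2 a) = (h a - h b) * (g1 b * g2 a - g1 a * g2 b)"
      by (simp add: algebra_simps)
    then show ?thesis unfolding eq using assms(3,4)[OF ba] by (simp add: mult_nonneg_nonneg)
  qed
qed

lemma dens_facts: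
  assumes ok: "predator_ok M X fA p phi" and t: "0 \<le> t" and fA: "\<forall>a\<ge>0. 0 \<le> fA a"
  shows "\<And>a. 0 \<le> age_dens fA p t a"
    and "integrable lborel (age_dens fA p t)"
    and "integral\<^sup>L lborel (age_dens fA p t) = 1"
    and "integrable lborel (\<lambda>a. a * age_dens fA p t a)"
    and "mean_age fA p t = integral\<^sup>L lborel (\<lambda>a. a * age_dens fA p t a)"
    and "integrable lborel (\<lambda>a. mom1 M X a * age_dens fA p t a)"
    and "mean_Xt M X fA p t = integral\<^sup>L lborel (\<lambda>a. mom1 M X a * age_dens fA p t a)"
    and "integrable lborel (\<lambda>a. mom2 M X a * age_dens fA p t a)"
    and "sq_Xt M X fA p t = integral\<^sup>L lborel (\<lambda>a. mom2 M X a * age_dens fA p t a)"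
    and "0 \<le> psi fA p phi t"
    and "0 < norm_const fA p t"
proof -
  note okd = ok[unfolded predator_ok_def]
  have p01: "\<forall>u t. 0 \<le> u \<longrightarrow> 0 \<le> t \<longrightarrow> 0 \<le> p u t \<and> p u t \<le> 1" using okd by simp
  have ph: "\<forall>t\<ge>0. 0 \<le> phi t" using okd by simp
  have si0: "\<forall>t\<ge>0. set_integrable lborel {0..} (\<lambda>u. p u t * fA u)" using okd by simp
  have nc0: "\<forall>t\<ge>0. 0 < norm_const fA p t" using okd by simp
  have i1: "\<forall>t\<ge>0. set_integrable lborel {0..} (\<lambda>a. a * age_dens fA p t a)" using okd by simp
  have i2: "\<forall>t\<ge>0. set_integrable lborel {0..} (\<lambda>a. mom1 M X a * age_dens fA p t a)" using okd by simp
  have i3: "\<forall>t\<ge>0. set_integrable lborel {0..} (\<lambda>a. mom2 M X a * age_dens fA p t a)" using okd by simp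
  have nc: "0 < norm_const fA p t" using nc0 t by blast
  then show "0 < norm_const fA p t" .
  show "0 \<le> age_dens fA p t a" for a
    using p01 t fA nc by (auto simp: age_dens_def intro!: divide_nonneg_pos mult_nonneg_nonneg)
  have z: "age_dens fA p t a = 0" if "a < 0" for a using that by (simp add: age_dens_def)
  have si: "set_integrable lborel {0..} (\<lambda>u. p u t * fA u)" using si0 t by blast
  have si2: "set_integrable lborel {0..} (\<lambda>u. p u t * fA u / norm_const fA p t)"
    using si by auto
  have cg: "set_integrable lborel {0..} (\<lambda>u. p u t * fA u / norm_const fA p t) = set_integrable lborel {0..} (age_dens fA p t)"
    by (rule set_integrable_cong) (auto simp: age_dens_def)
  show "integrable lborel (age_dens fA p t)"
    using si2 cg set0(1)[of "age_dens fA p t"] z by simp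
  have "integral\<^sup>L lborel (age_dens fA p t) = (LINT a:{0..}|lborel. age_dens fA p t a)"
    using set0(2)[of "age_dens fA p t"] z by simp
  also have "\<dots> = (LINT u:{0..}|lborel. p u t * fA u / norm_const fA p t)"
    by (rule set_lebesgue_integral_cong) (auto simp: age_dens_def)
  also have "\<dots> = 1" using nc by (simp add: norm_const_def[symmetric])
  finally show "integral\<^sup>L lborel (age_dens fA p t) = 1" .
  show "integrable lborel (\<lambda>a. a * age_dens fA p t a)"
    using i1 t set0(1)[of "\<lambda>a. a * age_dens fA p t a"] z by simp
  show "mean_age fA p t = integral\<^sup>L lborel (\<lambda>a. a * age_dens fA p t a)"
    unfolding mean_age_def using set0(2)[of "\<lambda>a. a * age_dens fA p t a"] z by simp
  show "integrable lborel (\<lambda>a. mom1 M X a * age_dens fA p t a)"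
    using i2 t set0(1)[of "\<lambda>a. mom1 M X a * age_dens fA p t a"] z by simp
  show "mean_Xt M X fA p t = integral\<^sup>L lborel (\<lambda>a. mom1 M X a * age_dens fA p t a)"
    unfolding mean_Xt_def using set0(2)[of "\<lambda>a. mom1 M X a * age_dens fA p t a"] z by simp
  show "integrable lborel (\<lambda>a. mom2 M X a * age_dens fA p t a)"
    using i3 t set0(1)[of "\<lambda>a. mom2 M X a * age_dens fA p t a"] z by simp
  show "sq_Xt M X fA p t = integral\<^sup>L lborel (\<lambda>a. mom2 M X a * age_dens fA p t a)"
    unfolding sq_Xt_def using set0(2)[of "\<lambda>a. mom2 M X a * age_dens fA p t a"] z by simp
  show "0 \<le> psi fA p phi t"
    using ph t nc by (simp add: psi_def)
qed




lemma age_dens_neg: "a < 0 \<Longrightarrow> age_dens fA p t a = 0" by (simp add: age_dens_def)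

lemma mean_age_pos:
  assumes ok: "predator_ok M X fA p phi" and t: "0 \<le> t" and fA: "\<forall>a\<ge>0. 0 \<le> fA a"
  shows "0 < mean_age fA p t"
proof -
  note d = dens_facts[OF assms]
  have nn: "0 \<le> a * age_dens fA p t a" for a
  proof (cases "a < 0")
    case True then show ?thesis by (simp add: age_dens_neg)
  next
    case False then show ?thesis using d(1)[of a] by simp
  qed
  have "mean_age fA p t \<noteq> 0"
  proof
    assume "mean_age fA p t = 0"
    then have "AE a in lborel. a * age_dens fA p t a = 0"
      using integral_nonneg_eq_0_iff_AE[OF d(4)] nn d(5) by simp
    then have "AE a in lborel. age_dens fA p t a = 0"
      using AE_lborel_singleton[of "0::real"] by eventually_elim auto
    then have "integral\<^sup>L lborel (age_dens fA p t) = 0" by (rule integral_eq_zero_AE)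
    then show False using d(3) by simp
  qed
  moreover have "0 \<le> mean_age fA p t" using d(5) nn by simp
  ultimately show ?thesis by simp
qed

theorem theorem3:
  fixes M :: "'a measure" and X :: "real \<Rightarrow> 'a \<Rightarrow> int"
    and fA :: "real \<Rightarrow> real"
    and p1 p2 :: "real \<Rightarrow> real \<Rightarrow> real" and phi1 phi2 :: "real \<Rightarrow> real"
  assumes "prob_space M"
    and "\<forall>t\<ge>0. X t \<in> measurable M (count_space UNIV)"
    and "\<forall>\<omega>\<in>space M. X 0 \<omega> = 0"
    and "\<forall>\<omega>\<in>space M. \<forall>s t. 0 \<le> s \<longrightarrow> s \<le> t \<longrightarrow> X s \<omega> \<le> X t \<omega>"
    and "\<forall>t\<ge>0. integrable M (\<lambda>\<omega>. real_of_int (X t \<omega>))"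
    and "\<forall>t\<ge>0. integrable M (\<lambda>\<omega>. (real_of_int (X t \<omega>))^2)"
    and "fA \<in> borel_measurable lborel"
    and "\<forall>a\<ge>0. 0 \<le> fA a"
    and "set_integrable lborel {0..} fA"
    and "(LINT a:{0..}|lborel. fA a) = 1"
    and "predator_ok M X fA p1 phi1"
    and "predator_ok M X fA p2 phi2"
    and A: "\<forall>s t. 0 \<le> s \<longrightarrow> s \<le> t \<longrightarrow> lr_le (pmf_X M X s) (pmf_X M X t)"
    and "assumption_B p1"
    and "assumption_B p2"
    and "\<exists>c. \<forall>t\<ge>0. mom1 M X t = c * t"
    and "\<forall>t\<ge>0. lr_le (age_dens fA p1 t) (age_dens fA p2 t)"
    and "\<forall>t\<ge>0. mean_age fA p1 t * psi fA p1 phi1 t = mean_age fA p2 t * psi fA p2 phi2 t"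
  shows "\<forall>t\<ge>0. psi fA p1 phi1 t \<ge> psi fA p2 phi2 t \<and>
           var_Y M X fA p1 phi1 t / mean_Y M X fA p1 phi1 t
             \<le> var_Y M X fA p2 phi2 t / mean_Y M X fA p2 phi2 t"
proof -
  note pm = assms(1)
  obtain c where c: "\<forall>t\<ge>0. mom1 M X t = c * t" using assms(16) by blast
  have Xnn: "\<forall>\<omega>\<in>space M. 0 \<le> X t \<omega>" if "0 \<le> t" for t
    using assms(3,4) that by (metis order_refl)
  have m2_0: "mom2 M X 0 = 0"
  proof -
    have "mom2 M X 0 = (\<integral>\<omega>. 0 \<partial>M)" unfolding mom2_def
      by (rule Bochner_Integration.integral_cong) (auto simp: assms(3))
    then show ?thesis by simp
  qed
  have m2_nn: "0 \<le> mom2 M X a" for a unfolding mom2_def by simp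
  have mon: "mom2 M X s * mom1 M X t \<le> mom2 M X t * mom1 M X s" if "0 \<le> s" "s \<le> t" for s t
    using mom_mono[of M X s t] assms(1,2,5,6,13) Xnn that by auto
  have mXt: "mean_Xt M X fA p s = c * mean_age fA p s"
    if ok: "predator_ok M X fA p phi" and s: "0 \<le> s" for p phi s
  proof -
    note d = dens_facts[OF ok s assms(8)]
    have "mean_Xt M X fA p s = integral\<^sup>L lborel (\<lambda>a. c * (a * age_dens fA p s a))"
      unfolding d(7)
    proof (rule Bochner_Integration.integral_cong[OF refl])
      fix a show "mom1 M X a * age_dens fA p s a = c * (a * age_dens fA p s a)"
        using c by (cases "a < 0") (auto simp: age_dens_neg)
    qed
    also have "\<dots> = c * mean_age fA p s" using d(5) by simp
    finally show ?thesis .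
  qed
  have c_pos: "0 < c"
  proof (rule ccontr)
    assume "\<not> 0 < c"
    then have c0: "c \<le> 0" by simp
    have "0 < mean_Y M X fA p1 phi1 1" using assms(11) unfolding predator_ok_def by simp
    moreover have "mean_Y M X fA p1 phi1 1 \<le> 0"
    proof -
      have "mean_Y M X fA p1 phi1 1 \<le> (LINT s:{0..1::real}|lborel. (0::real))"
        unfolding mean_Y_def
      proof (rule set_integral_mono)
        show "set_integrable lborel {0..1} (\<lambda>s. mean_Xt M X fA p1 s * psi fA p1 phi1 s)"
          using assms(11) unfolding predator_ok_def by simp
        show "set_integrable lborel {0..1} (\<lambda>s. 0::real)" by (simp add: set_integrable_def)
        fix s :: real assume "s \<in> {0..1}"
        then have s: "0 \<le> s" by simp
        have "0 \<le> mean_age fA p1 s" using mean_age_pos[OF assms(11) s assms(8)] by simp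
        moreover have "0 \<le> psi fA p1 phi1 s" using dens_facts(10)[OF assms(11) s assms(8)] .
        ultimately show "mean_Xt M X fA p1 s * psi fA p1 phi1 s \<le> 0"
          unfolding mXt[OF assms(11) s] using c0
          by (simp add: mult_nonpos_nonneg mult_nonneg_nonneg)
      qed
      then show ?thesis by (simp add: set_lebesgue_integral_def)
    qed
    ultimately show False by simp
  qed
  have pw: "psi fA p2 phi2 s \<le> psi fA p1 phi1 s \<and>
      sq_Xt M X fA p1 s * psi fA p1 phi1 s \<le> sq_Xt M X fA p2 s * psi fA p2 phi2 s"
    if s: "0 \<le> s" for s
  proof -
    let ?f1 = "age_dens fA p1 s" and ?f2 = "age_dens fA p2 s"
    note d1 = dens_facts[OF assms(11) s assms(8)] and d2 = dens_facts[OF assms(12) s assms(8)]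
    have ma1: "0 < mean_age fA p1 s" by (rule mean_age_pos[OF assms(11) s assms(8)])
    have ma2: "0 < mean_age fA p2 s" by (rule mean_age_pos[OF assms(12) s assms(8)])
    have cross: "?f1 b * ?f2 a \<le> ?f1 a * ?f2 b" if "a \<le> b" for a b
      using lr_cross[of UNIV ?f1 ?f2 a b] assms(17) s that d1(1) d2(1)
      unfolding lr_le_def by (auto simp: mult.commute)
    have "integral\<^sup>L lborel (\<lambda>a. a * ?f1 a) * integral\<^sup>L lborel ?f2
        \<le> integral\<^sup>L lborel (\<lambda>a. a * ?f2 a) * integral\<^sup>L lborel ?f1"
      by (rule chebyshev_lr[OF sigma_finite_lborel d1(2) d2(2) d1(4) d2(4)], rule pt_from_h[where h="\<lambda>a. a"])
         (auto intro: cross)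
    then have mle: "mean_age fA p1 s \<le> mean_age fA p2 s" using d1(3,5) d2(3,5) by simp
    have E: "mean_age fA p1 s * psi fA p1 phi1 s = mean_age fA p2 s * psi fA p2 phi2 s"
      using assms(18) s by blast
    have ps1: "0 \<le> psi fA p1 phi1 s" using d1(10) .
    have ps2: "0 \<le> psi fA p2 phi2 s" using d2(10) .
    have "mean_age fA p1 s * psi fA p2 phi2 s \<le> mean_age fA p2 s * psi fA p2 phi2 s"
      using mle ps2 by (simp add: mult_right_mono)
    then have "mean_age fA p1 s * psi fA p2 phi2 s \<le> mean_age fA p1 s * psi fA p1 phi1 s"
      using E by simp
    then have P: "psi fA p2 phi2 s \<le> psi fA p1 phi1 s" using ma1 by simp
    define h where "h = (\<lambda>a::real. if a \<le> 0 then 0 else mom2 M X a / a)"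
    have hmono: "h a \<le> h b" if "a \<le> b" for a b
    proof (cases "a \<le> 0")
      case True then show ?thesis unfolding h_def using m2_nn[of b] by auto
    next
      case False
      then have a0: "0 < a" and b0: "0 < b" using that by auto
      have "mom2 M X a * (c * b) \<le> mom2 M X b * (c * a)"
        using mon[of a b] c a0 b0 that by simp
      then have "c * (mom2 M X a * b) \<le> c * (mom2 M X b * a)" by (simp add: algebra_simps)
      then have "mom2 M X a * b \<le> mom2 M X b * a" using c_pos by simp
      then have "mom2 M X a / a \<le> mom2 M X b / b" using a0 b0 by (simp add: field_simps)
      then show ?thesis unfolding h_def using a0 b0 by simp
    qed
    have hg: "mom2 M X x * age_dens fA p s x = h x * (x * age_dens fA p s x)" for x p
    proof -
      consider "x < 0" | "x = 0" | "x > 0" by fastforce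
      then show ?thesis
      proof cases
        case 1 then show ?thesis by (simp add: age_dens_neg)
      next
        case 2 then show ?thesis by (simp add: m2_0 h_def)
      next
        case 3 then show ?thesis by (simp add: h_def)
      qed
    qed
    have gcross: "(b * ?f1 b) * (a * ?f2 a) \<le> (a * ?f1 a) * (b * ?f2 b)" if "a \<le> b" for a b
    proof (cases "a < 0")
      case True then show ?thesis by (simp add: age_dens_neg)
    next
      case False
      then have ab: "0 \<le> a * b" using that by simp
      have "(a * b) * (?f1 b * ?f2 a) \<le> (a * b) * (?f1 a * ?f2 b)"
        using mult_left_mono[OF cross[OF that] ab] .
      then show ?thesis by (simp add: algebra_simps)
    qed
    have "integral\<^sup>L lborel (\<lambda>a. mom2 M X a * ?f1 a) * integral\<^sup>L lborel (\<lambda>a. a * ?f2 a)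
        \<le> integral\<^sup>L lborel (\<lambda>a. mom2 M X a * ?f2 a) * integral\<^sup>L lborel (\<lambda>a. a * ?f1 a)"
      by (rule chebyshev_lr[OF sigma_finite_lborel d1(4) d2(4) d1(8) d2(8)], rule pt_from_h[where h=h], rule hg, rule hg, erule hmono, erule gcross)
    then have Q: "sq_Xt M X fA p1 s * mean_age fA p2 s \<le> sq_Xt M X fA p2 s * mean_age fA p1 s"
      using d1(5,9) d2(5,9) by simp
    have "sq_Xt M X fA p1 s * psi fA p1 phi1 s \<le> sq_Xt M X fA p2 s * psi fA p2 phi2 s"
    proof (cases "psi fA p2 phi2 s = 0")
      case True
      then have "psi fA p1 phi1 s = 0" using E ma1 by simp
      then show ?thesis using True by simp
    next
      case False
      then have p2: "0 < psi fA p2 phi2 s" using ps2 by simp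
      then have p1: "0 < psi fA p1 phi1 s" using P by simp
      define K where "K = mean_age fA p1 s * psi fA p1 phi1 s"
      have K: "0 < K" unfolding K_def using ma1 p1 by simp
      have "(sq_Xt M X fA p1 s * psi fA p1 phi1 s) * K
          = (sq_Xt M X fA p1 s * mean_age fA p2 s) * (psi fA p1 phi1 s * psi fA p2 phi2 s)"
        unfolding K_def using E by (simp add: algebra_simps)
      also have "\<dots> \<le> (sq_Xt M X fA p2 s * mean_age fA p1 s) * (psi fA p1 phi1 s * psi fA p2 phi2 s)"
        using Q p1 p2 by (simp add: mult_right_mono)
      also have "\<dots> = (sq_Xt M X fA p2 s * psi fA p2 phi2 s) * K"
        unfolding K_def by (simp add: algebra_simps)
      finally show ?thesis using K by simp
    qed
    then show ?thesis using P by simp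
  qed
  show ?thesis
  proof (intro allI impI conjI)
    fix t :: real assume t: "0 \<le> t"
    show "psi fA p2 phi2 t \<le> psi fA p1 phi1 t" using pw[OF t] by simp
    have meq: "mean_Y M X fA p1 phi1 t = mean_Y M X fA p2 phi2 t"
      unfolding mean_Y_def
    proof (rule set_lebesgue_integral_cong)
      show "{0..t} \<in> sets lborel" by simp
      show "\<forall>s. s \<in> {0..t} \<longrightarrow> mean_Xt M X fA p1 s * psi fA p1 phi1 s = mean_Xt M X fA p2 s * psi fA p2 phi2 s"
      proof (intro allI impI)
        fix s assume "s \<in> {0..t}"
        then have s: "0 \<le> s" by simp
        show "mean_Xt M X fA p1 s * psi fA p1 phi1 s = mean_Xt M X fA p2 s * psi fA p2 phi2 s"
          unfolding mXt[OF assms(11) s] mXt[OF assms(12) s]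
          using assms(18) s by (metis mult.assoc)
      qed
    qed
    have vle: "var_Y M X fA p1 phi1 t \<le> var_Y M X fA p2 phi2 t"
      unfolding var_Y_def
    proof (rule set_integral_mono)
      show "set_integrable lborel {0..t} (\<lambda>s. sq_Xt M X fA p1 s * psi fA p1 phi1 s)"
        using assms(11) t unfolding predator_ok_def by simp
      show "set_integrable lborel {0..t} (\<lambda>s. sq_Xt M X fA p2 s * psi fA p2 phi2 s)"
        using assms(12) t unfolding predator_ok_def by simp
      fix s assume "s \<in> {0..t}"
      then have s: "0 \<le> s" by simp
      show "sq_Xt M X fA p1 s * psi fA p1 phi1 s \<le> sq_Xt M X fA p2 s * psi fA p2 phi2 s"
        using pw[OF s] by simp
    qed
    have mnn: "0 \<le> mean_Y M X fA p2 phi2 t"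
      unfolding mean_Y_def set_lebesgue_integral_def
    proof (rule Bochner_Integration.integral_nonneg)
      fix s :: real
      show "0 \<le> indicator {0..t} s *\<^sub>R (mean_Xt M X fA p2 s * psi fA p2 phi2 s)"
      proof (cases "s \<in> {0..t}")
        case True
        then have s: "0 \<le> s" by simp
        have "0 \<le> mean_age fA p2 s" using mean_age_pos[OF assms(12) s assms(8)] by simp
        moreover have "0 \<le> psi fA p2 phi2 s" using dens_facts(10)[OF assms(12) s assms(8)] .
        ultimately show ?thesis unfolding mXt[OF assms(12) s] using c_pos True by simp
      qed simp
    qed
    show "var_Y M X fA p1 phi1 t / mean_Y M X fA p1 phi1 t
        \<le> var_Y M X fA p2 phi2 t / mean_Y M X fA p2 phi2 t"
      unfolding meq using vle mnn by (rule divide_right_mono)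
  qed
qed


end
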